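(* Let $a>0$, $b>0$, $c>0$ and put $\Phi(x)={}_1F_2\left(a\,;b,c\,;-\frac{x^2}{4}\right)$. Suppose $\Phi$ alternates in sign on $(0,\infty)$ and let $z_1$ denote its first zero on $(0,\infty)$. Then for any $\gamma\ge0$, $0\le\delta<b$, $0\le\epsilon<c$, the function $$\Psi(x)={}_1F_2\left(a+\gamma\,;b-\delta,\,c-\epsilon\,;-\frac{x^2}{4}\right)$$ also alternates in sign and possesses at least one zero on $(0,z_1]$.
   Context: For $a,b,c>0$, ${}_1F_2\left(a\,;b,c\,;-\frac{x^2}{4}\right)=\sum_{k=0}^\infty \frac{(a)_k}{k!\,(b)_k(c)_k}\left(-\frac{x^2}{4}\right)^k$, where $(\alpha)_k=\Gamma(\alpha+k)/\Gamma(\alpha)$. "Alternates in sign" means takes both positive and negative values on $(0,\infty)$. *)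

theory Defs
  imports "HOL-Analysis.Analysis"
begin

text \<open>The generalized hypergeometric function 1F2(a; b, c; y), given by its power series
  (which converges for every real y when b, c > 0).\<close>
definition hyp1F2 :: "real \<Rightarrow> real \<Rightarrow> real \<Rightarrow> real \<Rightarrow> real" where
  "hyp1F2 a b c y = (\<Sum>k. pochhammer a k / (fact k * pochhammer b k * pochhammer c k) * y ^ k)"

definition alternates_sign :: "(real \<Rightarrow> real) \<Rightarrow> bool" where
  "alternates_sign f \<longleftrightarrow> (\<exists>x>0. f x > 0) \<and> (\<exists>x>0. f x < 0)"

definition first_pos_zero :: "(real \<Rightarrow> real) \<Rightarrow> real" where
  "first_pos_zero f = Inf {x. x > 0 \<and> f x = 0}"

end

theory Submission
  imports Defs
begin

definition co :: "real \<Rightarrow> real \<Rightarrow> real \<Rightarrow> nat \<Rightarrow> real" where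
  "co a b c k = pochhammer a k / (fact k * pochhammer b k * pochhammer c k)"

lemma hyp_co: "hyp1F2 a b c y = (\<Sum>k. co a b c k * y ^ k)"
  unfolding hyp1F2_def co_def by simp

lemma co_nonneg: "a > 0 \<Longrightarrow> b > 0 \<Longrightarrow> c > 0 \<Longrightarrow> co a b c k \<ge> 0"
  unfolding co_def by (intro divide_nonneg_pos mult_pos_pos pochhammer_pos) (auto simp: pochhammer_nonneg)

lemma co_Suc: "b > 0 \<Longrightarrow> c > 0 \<Longrightarrow>
  co a b c (Suc k) = co a b c k * ((a + k) / ((k+1) * (b + k) * (c + k)))"
proof -
  assume b: "b > 0" and c: "c > 0"
  have "pochhammer b k > 0" "pochhammer c k > 0" using b c by (auto intro: pochhammer_pos)
  moreover have "b + k > 0" "c + k > 0" using b c by auto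
  ultimately show ?thesis unfolding co_def pochhammer_Suc fact_Suc
    by (simp add: field_simps)
qed

lemma co_summable:
  assumes a: "a > 0" and b: "b > 0" and c: "c > 0"
  shows "summable (\<lambda>k. norm (co a b c k * y ^ k))"
proof (rule summable_ratio_test[where c="1/2" and N="nat \<lceil>2*(a+1)*\<bar>y\<bar>/c\<rceil> + 1"])
  fix n assume n: "nat \<lceil>2*(a+1)*\<bar>y\<bar>/c\<rceil> + 1 \<le> n"
  have n1: "real n \<ge> 1" using n by auto
  have "2*(a+1)*\<bar>y\<bar>/c \<le> real (nat \<lceil>2*(a+1)*\<bar>y\<bar>/c\<rceil>)"
    by linarith
  also have "\<dots> \<le> real n" using n by (simp del: of_nat_le_iff add: of_nat_mono)
  finally have n2: "c * real n \<ge> 2*(a+1)*\<bar>y\<bar>" using c by (simp add: field_simps)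
  let ?r = "(a + n) / ((n+1) * (b + n) * (c + n))"
  have r0: "?r \<ge> 0" using a b c by auto
  have "(a + n) \<le> (a+1) * (n+1)" using a by (simp add: algebra_simps)
  moreover have "(n+1) * (c * n) \<le> (n+1) * ((b + n) * (c + n))"
  proof (intro mult_left_mono)
    have "(b + n) * (c + n) = c * n + (b * (c + n) + n * n)" by (simp add: algebra_simps)
    moreover have "b * (c + n) + n * n \<ge> 0" using b c by simp
    ultimately show "c * n \<le> (b + n) * (c + n)" by linarith
  qed simp
  ultimately have "?r \<le> (a+1) * (n+1) / ((n+1) * (c*n))"
    using a b c n1 by (intro frac_le) (auto simp: mult.assoc)
  hence "?r * \<bar>y\<bar> \<le> (a+1) * (n+1) / ((n+1) * (c*n)) * \<bar>y\<bar>"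
    by (intro mult_right_mono) auto
  also have "\<dots> = (a+1) * \<bar>y\<bar> / (c*n)" using n1 by simp
  also have "\<dots> \<le> 1/2" using n2 c n1 a by (simp add: field_simps)
  finally have *: "?r * \<bar>y\<bar> \<le> 1/2" .
  have "norm (co a b c (Suc n) * y ^ Suc n) = (co a b c n * \<bar>y\<bar>^n) * (?r * \<bar>y\<bar>)"
    using co_nonneg[OF a b c, of n] r0 b c a
    by (simp add: co_Suc abs_mult power_abs add.commute mult_ac)
  also have "\<dots> \<le> (co a b c n * \<bar>y\<bar>^n) * (1/2)"
    using co_nonneg[OF a b c, of n] * by (intro mult_left_mono) auto
  also have "\<dots> = 1/2 * norm (co a b c n * y ^ n)"
    using co_nonneg[OF a b c, of n] by (simp add: abs_mult power_abs)
  finally show "norm (norm (co a b c (Suc n) * y ^ Suc n)) \<le> 1/2 * norm (norm (co a b c n * y ^ n))"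
    by simp
qed simp


lemma moment:
  assumes p: "p > 0" and q: "q > 0"
  shows "((\<lambda>s. s^k * (s powr (p-1) * (1-s) powr (q-1))) has_integral Beta (p + real k) q) {0..1}"
proof (rule has_integral_eq[OF _ has_integral_Beta_real[of "p + real k" q]])
  fix x :: real assume x: "x \<in> {0..1}"
  show "x powr (p + real k - 1) * (1 - x) powr (q - 1) = x^k * (x powr (p-1) * (1-x) powr (q-1))"
  proof (cases "x = 0")
    case False
    with x have "x > 0" by auto
    hence "x powr (p + real k - 1) = x powr (p - 1) * x powr (real k)"
      by (simp add: powr_add[symmetric] algebra_simps)
    also have "x powr (real k) = x ^ k" using \<open>x > 0\<close> by (simp add: powr_realpow)
    finally show ?thesis by simp
  qed simp
qed (use p q in auto)

lemma not_nonpos_Int: "(p::real) > 0 \<Longrightarrow> p \<notin> \<int>\<^sub>\<le>\<^sub>0"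
  using nonpos_Ints_nonpos by fastforce

lemma Beta_pos: "(p::real) > 0 \<Longrightarrow> q > 0 \<Longrightarrow> Beta p q > 0"
  unfolding Beta_def by simp

lemma Beta_ratio:
  assumes p: "p > 0" and q: "q > (0::real)"
  shows "Beta (p + real k) q / Beta p q = pochhammer p k / pochhammer (p+q) k"
proof -
  have e1: "pochhammer p k = Gamma (p + k) / Gamma p"
    using p by (intro pochhammer_Gamma not_nonpos_Int)
  have e2: "pochhammer (p+q) k = Gamma (p + q + k) / Gamma (p+q)"
    using p q by (intro pochhammer_Gamma not_nonpos_Int) simp
  have "Gamma p > 0" "Gamma q > 0" "Gamma (p+q) > 0" "Gamma (p+k) > 0" "Gamma (p+q+k) > 0"
    using p q by auto
  then show ?thesis unfolding Beta_def e1 e2 by (simp add: field_simps add_ac)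
qed

lemma transform:
  fixes \<alpha> :: "nat \<Rightarrow> real"
  assumes summ: "\<And>R. summable (\<lambda>k. norm (\<alpha> k * R^k))" and p: "p>0" and q: "q>0"
  shows "((\<lambda>s. (s powr (p-1) * (1-s) powr (q-1)) * (\<Sum>k. \<alpha> k * (s*y)^k))
           has_integral (\<Sum>k. \<alpha> k * Beta (p + real k) q * y^k)) {0..1}"
proof -
  define w where "w s = s powr (p-1) * (1-s) powr (q-1)" for s :: real
  define f where "f n s = w s * (\<Sum>k<n. \<alpha> k * (s*y)^k)" for n s
  define M where "M = (\<Sum>k. norm (\<alpha> k * y^k))"
  define g where "g s = w s * (\<Sum>k. \<alpha> k * (s*y)^k)" for s
  have fint: "(f n has_integral (\<Sum>k<n. \<alpha> k * Beta (p + real k) q * y^k)) {0..1}" for n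
  proof -
    have "((\<lambda>s. \<Sum>k<n. (\<alpha> k * y^k) * (s^k * w s)) has_integral
            (\<Sum>k<n. (\<alpha> k * y^k) * Beta (p + real k) q)) {0..1}"
      unfolding w_def by (intro has_integral_sum has_integral_mult_right moment p q) auto
    then show ?thesis
      by (rule has_integral_eq[rotated, THEN has_integral_eq_rhs])
         (simp_all add: f_def sum_distrib_left power_mult_distrib mult_ac)
  qed
  have hint: "(\<lambda>s. w s * M) integrable_on {0..1}"
    using has_integral_mult_left[OF has_integral_Beta_real[OF p q], of M]
    unfolding w_def integrable_on_def by blast
  have bound: "norm (f n s) \<le> w s * M" if s: "s \<in> {0..1}" for n s
  proof -
    have w0: "w s \<ge> 0" by (simp add: w_def)
    have "norm (\<Sum>k<n. \<alpha> k * (s*y)^k) \<le> (\<Sum>k<n. norm (\<alpha> k * (s*y)^k))"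
      by (rule norm_sum)
    also have "\<dots> \<le> (\<Sum>k<n. norm (\<alpha> k * y^k))"
    proof (intro sum_mono)
      fix k
      have "s^k \<le> 1" using s by (intro power_le_one) auto
      hence "\<bar>\<alpha> k\<bar> * \<bar>y\<bar>^k * s^k \<le> \<bar>\<alpha> k\<bar> * \<bar>y\<bar>^k * 1"
        by (intro mult_left_mono) auto
      thus "norm (\<alpha> k * (s*y)^k) \<le> norm (\<alpha> k * y^k)"
        using s by (simp add: abs_mult power_abs power_mult_distrib mult_ac)
    qed
    also have "\<dots> \<le> M" unfolding M_def by (intro sum_le_suminf summ) auto
    finally show ?thesis unfolding f_def using w0 by (simp add: abs_mult mult_left_mono)
  qed
  have conv: "(\<lambda>n. f n s) \<longlonglongrightarrow> g s" for s
    unfolding f_def g_def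
    by (intro tendsto_mult_left summable_LIMSEQ summable_norm_cancel[OF summ])
  have fint': "f n integrable_on {0..1}" for n using fint[of n] by blast
  note dc = dominated_convergence[OF fint' hint bound conv]
  have "(\<lambda>n. \<Sum>k<n. \<alpha> k * Beta (p + real k) q * y^k) \<longlonglongrightarrow> integral {0..1} g"
  proof -
    have eq: "\<And>n. integral {0..1} (f n) = (\<Sum>k<n. \<alpha> k * Beta (p + real k) q * y^k)"
      by (rule integral_unique[OF fint])
    show ?thesis using dc(2) unfolding eq .
  qed
  hence "(\<lambda>k. \<alpha> k * Beta (p + real k) q * y^k) sums integral {0..1} g"
    by (simp add: sums_def)
  hence "(\<Sum>k. \<alpha> k * Beta (p + real k) q * y^k) = integral {0..1} g" by (rule sums_unique[symmetric])
  with dc(1) show ?thesis unfolding g_def w_def by (simp add: has_integral_integral)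
qed


lemma step:
  fixes \<alpha> \<beta> :: "nat \<Rightarrow> real"
  assumes summ: "\<And>R. summable (\<lambda>k. norm (\<alpha> k * R^k))" and p: "p>0" and q: "q>0"
    and \<beta>: "\<And>k. \<beta> k = \<alpha> k * (pochhammer p k / pochhammer (p+q) k)"
    and y: "y \<in> {Y..0}"
  shows "(\<forall>t\<in>{Y..0}. (\<Sum>k. \<alpha> k * t^k) \<ge> 0) \<Longrightarrow> (\<Sum>k. \<beta> k * y^k) \<ge> 0"
    and "(\<forall>t\<in>{Y..0}. (\<Sum>k. \<alpha> k * t^k) > 0) \<Longrightarrow> (\<Sum>k. \<beta> k * y^k) > 0"
proof -
  define w where "w s = s powr (p-1) * (1-s) powr (q-1)" for s :: real
  define F where "F t = (\<Sum>k. \<alpha> k * t^k)" for t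
  define h where "h s = w s * F (s*y)" for s
  define I where "I = (\<Sum>k. \<alpha> k * Beta (p + real k) q * y^k)"
  have hI: "(h has_integral I) {0..1}"
    unfolding h_def w_def F_def I_def by (rule transform[OF summ p q])
  have B: "Beta p q > 0" using p q by (rule Beta_pos)
  have Bk: "\<bar>Beta (p + real k) q\<bar> \<le> Beta p q" for k
  proof -
    have "Beta (p + real k) q \<le> Beta (p + real 0) q"
    proof (rule has_integral_le[OF moment[OF p q, of k] moment[OF p q, of 0]])
      fix s :: real assume s: "s \<in> {0..1}"
      have "s^k \<le> 1" using s by (intro power_le_one) auto
      thus "s^k * (s powr (p-1) * (1-s) powr (q-1)) \<le> s^0 * (s powr (p-1) * (1-s) powr (q-1))"
        by (intro mult_right_mono) auto
    qed
    moreover have "Beta (p + real k) q > 0" using p q by (intro Beta_pos) auto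
    ultimately show ?thesis by simp
  qed
  have sumB: "summable (\<lambda>k. \<alpha> k * Beta (p + real k) q * y^k)"
  proof (rule summable_comparison_test)
    show "\<exists>N. \<forall>n\<ge>N. norm (\<alpha> n * Beta (p + real n) q * y^n) \<le> Beta p q * norm (\<alpha> n * y^n)"
    proof (intro exI[of _ 0] allI impI)
      fix n :: nat
      have "(\<bar>\<alpha> n\<bar> * \<bar>y^n\<bar>) * \<bar>Beta (p + real n) q\<bar> \<le> (\<bar>\<alpha> n\<bar> * \<bar>y^n\<bar>) * Beta p q"
        using Bk by (intro mult_left_mono) auto
      thus "norm (\<alpha> n * Beta (p + real n) q * y^n) \<le> Beta p q * norm (\<alpha> n * y^n)"
        by (simp add: abs_mult mult_ac)
    qed
    show "summable (\<lambda>n. Beta p q * norm (\<alpha> n * y^n))" by (intro summable_mult summ)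
  qed
  have "(\<Sum>k. \<beta> k * y^k) = (\<Sum>k. \<alpha> k * Beta (p + real k) q * y^k / Beta p q)"
  proof (rule suminf_cong)
    fix k
    have "\<beta> k * y^k = \<alpha> k * y^k * (Beta (p + real k) q / Beta p q)"
      using Beta_ratio[OF p q, of k] by (simp add: \<beta>)
    thus "\<beta> k * y^k = \<alpha> k * Beta (p + real k) q * y^k / Beta p q" by simp
  qed
  also have "\<dots> = I / Beta p q" unfolding I_def by (rule suminf_divide[OF sumB])
  finally have eq: "(\<Sum>k. \<beta> k * y^k) = I / Beta p q" .
  have sy: "s * y \<in> {Y..0}" if "s \<in> {0..1}" for s
  proof -
    have "(s - 1) * y \<ge> 0" using that y by (intro mult_nonpos_nonpos) auto
    thus ?thesis using that y by (auto simp: algebra_simps mult_nonneg_nonpos)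
  qed
  have w0: "w s \<ge> 0" for s by (simp add: w_def)
  {
    assume H: "\<forall>t\<in>{Y..0}. (\<Sum>k. \<alpha> k * t^k) \<ge> 0"
    have "I \<ge> 0"
      by (rule has_integral_nonneg[OF hI]) (use H sy w0 in \<open>auto simp: h_def F_def\<close>)
    thus "(\<Sum>k. \<beta> k * y^k) \<ge> 0" using eq B by simp
  }
  {
    assume H: "\<forall>t\<in>{Y..0}. (\<Sum>k. \<alpha> k * t^k) > 0"
    have Fc: "isCont F t" for t unfolding F_def
      by (rule isCont_powser_converges_everywhere) (rule summable_norm_cancel[OF summ])
    have hc: "continuous_on {1/4..3/4} h"
    proof (intro continuous_at_imp_continuous_on ballI)
      fix s :: real assume s: "s \<in> {1/4..3/4}"
      have "isCont (\<lambda>s. F (s*y)) s" by (intro continuous_intros isCont_o2[OF _ Fc])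
      moreover have "isCont w s" unfolding w_def using s by (intro continuous_intros) auto
      ultimately show "isCont h s" unfolding h_def by (intro continuous_intros)
    qed
    have hnn: "\<forall>s\<in>{0..1}. 0 \<le> h s" using H sy w0 by (auto simp: h_def F_def less_imp_le)
    have hint: "h integrable_on {1/4..3/4}"
      by (rule integrable_on_subinterval[OF has_integral_integrable[OF hI]]) auto
    have h12: "h (1/2) > 0"
    proof -
      have "w (1/2) > 0" by (simp add: w_def)
      moreover have "F (1/2 * y) > 0" using H sy[of "1/2"] by (simp add: F_def)
      ultimately show ?thesis by (simp add: h_def)
    qed
    have J: "integral {1/4..3/4} h \<noteq> 0"
    proof
      assume "integral {1/4..3/4} h = 0"
      hence "(h has_integral 0) (cbox (1/4) (3/4))"
        using hint by (metis cbox_interval has_integral_integral)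
      from has_integral_0_cbox_imp_0[OF _ _ this, of "1/2"] hc hnn h12
      show False by auto
    qed
    have "integral {1/4..3/4} h \<ge> 0"
      using hnn by (intro integral_nonneg hint) auto
    moreover have "integral {1/4..3/4} h \<le> I"
      by (rule has_integral_subset_le[OF _ integrable_integral[OF hint] hI hnn]) auto
    ultimately have "I > 0" using J by linarith
    thus "(\<Sum>k. \<beta> k * y^k) > 0" using eq B by simp
  }
qed


definition NN :: "real \<Rightarrow> real \<Rightarrow> real \<Rightarrow> real \<Rightarrow> bool" where
  "NN a b c Y \<longleftrightarrow> (\<forall>t\<in>{Y..0}. hyp1F2 a b c t \<ge> 0)"
definition PS :: "real \<Rightarrow> real \<Rightarrow> real \<Rightarrow> real \<Rightarrow> bool" where
  "PS a b c Y \<longleftrightarrow> (\<forall>t\<in>{Y..0}. hyp1F2 a b c t > 0)"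

lemma hyp_sym: "hyp1F2 a b c = hyp1F2 a c b"
  unfolding hyp1F2_def by (simp add: mult_ac)

lemma hyp_step_a:
  assumes a: "a > 0" and g: "g \<ge> 0" and b: "b > 0" and c: "c > 0"
  shows "(NN (a+g) b c Y \<longrightarrow> NN a b c Y) \<and> (PS (a+g) b c Y \<longrightarrow> PS a b c Y)"
proof (cases "g = 0")
  case False
  hence g': "g > 0" using g by simp
  have summ: "\<And>R. summable (\<lambda>k. norm (co (a+g) b c k * R^k))"
    using a g b c by (intro co_summable) auto
  have \<beta>: "co a b c k = co (a+g) b c k * (pochhammer a k / pochhammer (a+g) k)" for k
  proof -
    have "pochhammer (a+g) k > 0" using a g by (intro pochhammer_pos) auto
    thus ?thesis unfolding co_def by (simp add: field_simps)
  qed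
  show ?thesis unfolding NN_def PS_def hyp_co
    using step[OF summ a g' \<beta>] by blast
qed simp

lemma hyp_step_b:
  assumes a: "a > 0" and d: "d \<ge> 0" and b: "b > 0" and c: "c > 0"
  shows "(NN a b c Y \<longrightarrow> NN a (b+d) c Y) \<and> (PS a b c Y \<longrightarrow> PS a (b+d) c Y)"
proof (cases "d = 0")
  case False
  hence d': "d > 0" using d by simp
  have summ: "\<And>R. summable (\<lambda>k. norm (co a b c k * R^k))"
    using a b c by (intro co_summable) auto
  have \<beta>: "co a (b+d) c k = co a b c k * (pochhammer b k / pochhammer (b+d) k)" for k
  proof -
    have "pochhammer (b+d) k > 0" "pochhammer b k > 0" "pochhammer c k > 0"
      using b d c by (auto intro: pochhammer_pos)
    thus ?thesis unfolding co_def by (simp add: field_simps)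
  qed
  show ?thesis unfolding NN_def PS_def hyp_co
    using step[OF summ b d' \<beta>] by blast
qed simp

lemma hyp_chain:
  assumes a: "a > 0" and g: "g \<ge> 0" and b: "b' > 0" and c: "c' > 0" and d: "d \<ge> 0" and e: "e \<ge> 0"
  shows "(NN (a+g) b' c' Y \<longrightarrow> NN a (b'+d) (c'+e) Y) \<and> (PS (a+g) b' c' Y \<longrightarrow> PS a (b'+d) (c'+e) Y)"
proof -
  note A = hyp_step_a[OF a g b c, of Y]
  note B = hyp_step_b[OF a d b c, of Y]
  have C: "(NN a (b'+d) c' Y \<longrightarrow> NN a (b'+d) (c'+e) Y) \<and> (PS a (b'+d) c' Y \<longrightarrow> PS a (b'+d) (c'+e) Y)"
    using hyp_step_b[OF a e c, of "b'+d" Y] b d unfolding NN_def PS_def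
    by (simp only: hyp_sym[of a "b'+d" c'] hyp_sym[of a "b'+d" "c'+e"]) simp
  from A B C show ?thesis by blast
qed


lemma hyp0: "hyp1F2 a b c 0 = 1"
  unfolding hyp_co using powser_zero[of "co a b c"] by (simp add: co_def)

lemma hcont:
  assumes "a > 0" "b > 0" "c > 0"
  shows "isCont (\<lambda>x. hyp1F2 a b c (- (x\<^sup>2) / 4)) x"
proof -
  have hc: "isCont (hyp1F2 a b c) t" for t unfolding hyp_co[abs_def]
    by (rule isCont_powser_converges_everywhere)
       (rule summable_norm_cancel[OF co_summable[OF assms]])
  show ?thesis by (intro isCont_o2[OF _ hc]) (intro continuous_intros, simp)
qed

lemma hcont_on:
  assumes "a > 0" "b > 0" "c > 0"
  shows "continuous_on S (\<lambda>x. hyp1F2 a b c (- (x\<^sup>2) / 4))"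
  using hcont[OF assms] by (intro continuous_at_imp_continuous_on) auto

lemma pos_near0:
  assumes "a > 0" "b > 0" "c > 0"
  shows "\<exists>d>0. \<forall>x. \<bar>x\<bar> < d \<longrightarrow> hyp1F2 a b c (- (x\<^sup>2) / 4) > 0"
proof -
  from hcont[OF assms, of 0] obtain d where d: "d > 0"
    "\<And>x. dist x 0 < d \<Longrightarrow> dist (hyp1F2 a b c (- (x\<^sup>2) / 4)) (hyp1F2 a b c (- (0\<^sup>2) / 4)) < 1"
    unfolding continuous_at_eps_delta by (meson zero_less_one)
  show ?thesis
  proof (intro exI[of _ d] conjI allI impI)
    fix x :: real assume "\<bar>x\<bar> < d"
    with d(2)[of x] show "hyp1F2 a b c (- (x\<^sup>2) / 4) > 0" by (simp add: hyp0 dist_real_def)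
  qed fact
qed

lemma to_interval:
  fixes X t :: real
  assumes X: "X \<ge> 0" and t: "t \<in> {- (X\<^sup>2) / 4..0}" and t0: "t \<noteq> 0"
  shows "\<exists>x. 0 < x \<and> x \<le> X \<and> t = - (x\<^sup>2) / 4"
proof (intro exI conjI)
  have tn: "t < 0" using t t0 by auto
  show "0 < 2 * sqrt (-t)" using tn by simp
  have "sqrt (-t) \<le> sqrt ((X/2)\<^sup>2)" using t by (intro real_sqrt_le_mono) (auto simp: power_divide)
  thus "2 * sqrt (-t) \<le> X" using X by simp
  show "t = - ((2 * sqrt (-t))\<^sup>2) / 4" using tn by (simp add: power_mult_distrib)
qed

lemma NN_of:
  assumes X: "X \<ge> 0" and H: "\<And>x. 0 < x \<Longrightarrow> x \<le> X \<Longrightarrow> hyp1F2 a b c (- (x\<^sup>2) / 4) \<ge> 0"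
  shows "NN a b c (- (X\<^sup>2) / 4)"
  unfolding NN_def
proof
  fix t assume t: "t \<in> {- (X\<^sup>2) / 4..0}"
  show "hyp1F2 a b c t \<ge> 0"
  proof (cases "t = 0")
    case False
    then obtain x where "0 < x" "x \<le> X" "t = - (x\<^sup>2) / 4" using to_interval[OF X t] by blast
    thus ?thesis using H by simp
  qed (simp add: hyp0)
qed

lemma PS_of:
  assumes X: "X \<ge> 0" and H: "\<And>x. 0 < x \<Longrightarrow> x \<le> X \<Longrightarrow> hyp1F2 a b c (- (x\<^sup>2) / 4) > 0"
  shows "PS a b c (- (X\<^sup>2) / 4)"
  unfolding PS_def
proof
  fix t assume t: "t \<in> {- (X\<^sup>2) / 4..0}"
  show "hyp1F2 a b c t > 0"
  proof (cases "t = 0")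
    case False
    then obtain x where "0 < x" "x \<le> X" "t = - (x\<^sup>2) / 4" using to_interval[OF X t] by blast
    thus ?thesis using H by simp
  qed (simp add: hyp0)
qed

theorem lemma2:
  fixes a b c \<gamma> \<delta> \<epsilon> :: real
  assumes "a > 0" "b > 0" "c > 0"
    and "alternates_sign (\<lambda>x. hyp1F2 a b c (- (x\<^sup>2) / 4))"
    and "\<gamma> \<ge> 0" "0 \<le> \<delta>" "\<delta> < b" "0 \<le> \<epsilon>" "\<epsilon> < c"
  shows "alternates_sign (\<lambda>x. hyp1F2 (a + \<gamma>) (b - \<delta>) (c - \<epsilon>) (- (x\<^sup>2) / 4))
    \<and> (\<exists>x. 0 < x \<and> x \<le> first_pos_zero (\<lambda>x. hyp1F2 a b c (- (x\<^sup>2) / 4))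
           \<and> hyp1F2 (a + \<gamma>) (b - \<delta>) (c - \<epsilon>) (- (x\<^sup>2) / 4) = 0)"
proof -
  note as = assms
  define a' where "a' = a + \<gamma>"
  define b' where "b' = b - \<delta>"
  define c' where "c' = c - \<epsilon>"
  define \<Phi> where "\<Phi> x = hyp1F2 a b c (- (x\<^sup>2) / 4)" for x
  define \<Psi> where "\<Psi> x = hyp1F2 a' b' c' (- (x\<^sup>2) / 4)" for x
  have a': "a' > 0" and b': "b' > 0" and c': "c' > 0" using as by (auto simp: a'_def b'_def c'_def)
  have chain: "(NN a' b' c' Y \<longrightarrow> NN a b c Y) \<and> (PS a' b' c' Y \<longrightarrow> PS a b c Y)" for Y
    using hyp_chain[OF as(1) as(5) b' c' as(6) as(8), of Y]
    by (simp add: a'_def b'_def c'_def)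
  from as(4) obtain x1 where x1: "x1 > 0" "\<Phi> x1 < 0" unfolding alternates_sign_def \<Phi>_def by blast
  have \<Phi>0: "\<Phi> 0 = 1" and \<Psi>0: "\<Psi> 0 = 1" by (simp_all add: \<Phi>_def \<Psi>_def hyp0)
  have \<Phi>c: "continuous_on S \<Phi>" for S unfolding \<Phi>_def using as by (intro hcont_on) auto
  have \<Psi>c: "continuous_on S \<Psi>" for S unfolding \<Psi>_def using a' b' c' by (intro hcont_on) auto
  have part1: "alternates_sign \<Psi>"
    unfolding alternates_sign_def
  proof
    obtain d where d: "d > 0" "\<And>x. \<bar>x\<bar> < d \<Longrightarrow> \<Psi> x > 0"
      using pos_near0[OF a' b' c'] unfolding \<Psi>_def by blast
    show "\<exists>x>0. \<Psi> x > 0" using d by (intro exI[of _ "d/2"]) auto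
    show "\<exists>x>0. \<Psi> x < 0"
    proof (rule ccontr)
      assume "\<not> (\<exists>x>0. \<Psi> x < 0)"
      hence H: "\<And>x. 0 < x \<Longrightarrow> \<Psi> x \<ge> 0" by (meson not_less)
      have "NN a' b' c' (- (x1\<^sup>2) / 4)" using x1 H unfolding \<Psi>_def by (intro NN_of) auto
      hence "NN a b c (- (x1\<^sup>2) / 4)" using chain by blast
      hence "\<Phi> x1 \<ge> 0" unfolding NN_def \<Phi>_def by auto
      thus False using x1 by simp
    qed
  qed
  define Z where "Z = {x. x > 0 \<and> \<Phi> x = 0}"
  obtain d where d: "d > 0" "\<And>x. \<bar>x\<bar> < d \<Longrightarrow> \<Phi> x > 0"
    using pos_near0[OF as(1-3)] unfolding \<Phi>_def by blast
  have "\<exists>x\<ge>0. x \<le> x1 \<and> \<Phi> x = 0"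
    using x1 \<Phi>0 \<Phi>c by (intro IVT2') auto
  then obtain x0 where x0: "x0 \<ge> 0" "\<Phi> x0 = 0" by blast
  have "x0 \<noteq> 0" using x0 \<Phi>0 by auto
  hence Zne: "Z \<noteq> {}" using x0 unfolding Z_def by (metis (mono_tags, lifting) empty_iff mem_Collect_eq order_le_less)
  have Zeq: "Z = {x \<in> {0..}. \<Phi> x = 0}"
  proof (intro set_eqI iffI)
    fix x assume "x \<in> {x \<in> {0..}. \<Phi> x = 0}"
    hence "x \<ge> 0" "\<Phi> x = 0" by auto
    moreover have "x \<noteq> 0" using \<open>\<Phi> x = 0\<close> \<Phi>0 by auto
    ultimately show "x \<in> Z" unfolding Z_def by auto
  qed (auto simp: Z_def)
  have "closed Z" unfolding Zeq by (intro continuous_closed_preimage_constant \<Phi>c) auto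
  moreover have "bdd_below Z" unfolding Z_def by (intro bdd_belowI[of _ 0]) auto
  ultimately have "Inf Z \<in> Z" using Zne by (intro closed_contains_Inf)
  hence z1: "Inf Z > 0" "\<Phi> (Inf Z) = 0" unfolding Z_def by auto
  have fz: "first_pos_zero (\<lambda>x. hyp1F2 a b c (- (x\<^sup>2) / 4)) = Inf Z"
    unfolding first_pos_zero_def Z_def \<Phi>_def by simp
  have part2: "\<exists>x. 0 < x \<and> x \<le> Inf Z \<and> \<Psi> x = 0"
  proof (rule ccontr)
    assume nz: "\<not> (\<exists>x. 0 < x \<and> x \<le> Inf Z \<and> \<Psi> x = 0)"
    have "\<Psi> x > 0" if x: "0 < x" "x \<le> Inf Z" for x
    proof (rule ccontr)
      assume "\<not> \<Psi> x > 0"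
      hence "\<exists>y\<ge>0. y \<le> x \<and> \<Psi> y = 0" using x \<Psi>0 \<Psi>c by (intro IVT2') auto
      then obtain y where y: "y \<ge> 0" "y \<le> x" "\<Psi> y = 0" by blast
      have "y \<noteq> 0" using y \<Psi>0 by auto
      thus False using nz y x by auto
    qed
    hence "PS a' b' c' (- ((Inf Z)\<^sup>2) / 4)" using z1 by (intro PS_of) (auto simp: \<Psi>_def)
    hence "PS a b c (- ((Inf Z)\<^sup>2) / 4)" using chain by blast
    hence "\<Phi> (Inf Z) > 0" unfolding PS_def \<Phi>_def by auto
    thus False using z1 by simp
  qed
  show ?thesis using part1 part2 unfolding fz \<Psi>_def a'_def b'_def c'_def by blast
qed

end
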